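(* Let $X$ be a real Banach space, $\tau$ the norm or weak topology, and $Y$ a (closed linear) subspace of $X$ such that $(X,Y,\mathcal{F}(X))$ has $\tau$-$\mathscr{F}_{cwm}$-SACP. Then for every $N\in\mathbb{N}$ and every $f:[0,\infty)^N\to[0,\infty)$ in $\mathscr{F}_{cwm}$, the set-valued map $\mathrm{Cent}_Y^f:(\mathcal{F}_N(X),d)\to\mathcal{CB}(Y)$ is metric-$\tau$ upper semicontinuous, i.e., for every $F\in\mathcal{F}_N(X)$ and every $\tau$-open set $W\supseteq\mathrm{Cent}_Y^f(F)$ there is a $d$-open set $U\ni F$ with $\mathrm{Cent}_Y^f(G)\subseteq W$ for all $G\in U$.
   Context: $\mathcal{F}(X)$ is the family of nonempty finite subsets of $X$; $\mathcal{F}_N(X)$ the subsets of cardinality $N$, each written with a fixed enumeration $\{x_1,\dots,x_N\}$, with metric $d(F_1,F_2)=\max_i\|x_i-x_i'\|$. $\mathcal{CB}(Y)$ denotes the closed bounded subsets of $Y$. $\mathscr{F}_{cwm}$ is the class of convex functions $f:[0,\infty)^N\to[0,\infty)$ ($N\in\mathbb{N}$) that are monotone ($a\le b$ coordinatewise implies $f(a)\le f(b)$) and weakly strictly monotone ($a_i<b_i$ for all $i$ implies $f(a)<f(b)$). For $F=\{x_1,\dots,x_N\}$: $r_f(y,F)=f(\|y-x_1\|,\dots,\|y-x_N\|)$, $\mathrm{rad}_Y^f(F)=\inf_{y\in Y}r_f(y,F)$, $\mathrm{Cent}_Y^f(F)=\{y\in Y:r_f(y,F)=\mathrm{rad}_Y^f(F)\}$.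 $(X,Y,\mathcal{F}(X))$ has $\tau$-$\mathscr{F}_{cwm}$-SACP if for every $F\in\mathcal{F}(X)$, every $f\in\mathscr{F}_{cwm}$ on $[0,\infty)^{card(F)}$ and every sequence $(y_n)\subseteq Y$ with $r_f(y_n,F)\to\mathrm{rad}_Y^f(F)$, $(y_n)$ has a $\tau$-convergent subsequence. *)

theory Defs
  imports "HOL-Analysis.Analysis"
begin

text \<open>Points of [0,inf)^N are represented as functions nat => real which are
  nonnegative on indices i < N and vanish at indices i >= N.\<close>
definition nonneg_orthant :: "nat \<Rightarrow> (nat \<Rightarrow> real) set" where
  "nonneg_orthant N = {a. (\<forall>i<N. 0 \<le> a i) \<and> (\<forall>i\<ge>N. a i = 0)}"

definition cwm :: "nat \<Rightarrow> ((nat \<Rightarrow> real) \<Rightarrow> real) \<Rightarrow> bool" where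
  "cwm N f \<longleftrightarrow>
     (\<forall>a\<in>nonneg_orthant N. 0 \<le> f a) \<and>
     (\<forall>a\<in>nonneg_orthant N. \<forall>b\<in>nonneg_orthant N. \<forall>t::real. 0 \<le> t \<and> t \<le> 1 \<longrightarrow>
        f (\<lambda>i. t * a i + (1 - t) * b i) \<le> t * f a + (1 - t) * f b) \<and>
     (\<forall>a\<in>nonneg_orthant N. \<forall>b\<in>nonneg_orthant N. (\<forall>i<N. a i \<le> b i) \<longrightarrow> f a \<le> f b) \<and>
     (\<forall>a\<in>nonneg_orthant N. \<forall>b\<in>nonneg_orthant N. (\<forall>i<N. a i < b i) \<longrightarrow> f a < f b)"

text \<open>A finite set F = {x_1,...,x_N} of cardinality N with its fixed enumeration
  is represented by x :: nat => 'a, injective on {..<N} (indices 0..N-1).\<close>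
definition r_f :: "((nat \<Rightarrow> real) \<Rightarrow> real) \<Rightarrow> nat \<Rightarrow> (nat \<Rightarrow> 'a::real_normed_vector) \<Rightarrow> 'a \<Rightarrow> real" where
  "r_f f N x y = f (\<lambda>i. if i < N then norm (y - x i) else 0)"

definition rad_f :: "'a::real_normed_vector set \<Rightarrow> ((nat \<Rightarrow> real) \<Rightarrow> real) \<Rightarrow> nat \<Rightarrow> (nat \<Rightarrow> 'a) \<Rightarrow> real" where
  "rad_f Y f N x = (INF y\<in>Y. r_f f N x y)"

definition Cent_f :: "'a::real_normed_vector set \<Rightarrow> ((nat \<Rightarrow> real) \<Rightarrow> real) \<Rightarrow> nat \<Rightarrow> (nat \<Rightarrow> 'a) \<Rightarrow> 'a set" where
  "Cent_f Y f N x = {y\<in>Y. r_f f N x y = rad_f Y f N x}"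

definition weak_topology :: "'a::real_normed_vector topology" where
  "weak_topology = topology_generated_by {{x. l x \<in> U} | l U. bounded_linear (l :: 'a \<Rightarrow> real) \<and> open U}"

definition SACP_cwm :: "'a::real_normed_vector topology \<Rightarrow> 'a set \<Rightarrow> bool" where
  "SACP_cwm \<tau> Y \<longleftrightarrow>
     (\<forall>N x f (y :: nat \<Rightarrow> 'a). N \<ge> 1 \<and> inj_on x {..<N} \<and> cwm N f \<and> (\<forall>n. y n \<in> Y) \<and>
        (\<lambda>n. r_f f N x (y n)) \<longlonglongrightarrow> rad_f Y f N x \<longrightarrow>
        (\<exists>r l. strict_mono r \<and> limitin \<tau> (y \<circ> r) l sequentially))"

end

theory Submission
  imports Defs
begin


lemma HB_seminorm:
  fixes p :: "'a::real_vector \<Rightarrow> real"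
  assumes sub: "\<And>u w. p (u + w) \<le> p u + p w" and hom: "\<And>c u. p (c *\<^sub>R u) = \<bar>c\<bar> * p u"
  shows "\<exists>h. linear h \<and> (\<forall>u. h u \<le> p u) \<and> h v = p v"
proof -
  define A where "A = {G :: ('a \<times> real) set. (\<forall>a s b t. (a,s)\<in>G \<longrightarrow> (b,t)\<in>G \<longrightarrow> (a+b,s+t)\<in>G)
     \<and> (\<forall>a s c. (a,s)\<in>G \<longrightarrow> (c *\<^sub>R a, c * s)\<in>G) \<and> (\<forall>a s. (a,s)\<in>G \<longrightarrow> s \<le> p a) \<and> (v, p v) \<in> G}"
  define G0 where "G0 = range (\<lambda>c. (c *\<^sub>R v, c * p v))"
  have p0: "p 0 = 0" using hom[of 0 0] by simp
  have pnn: "0 \<le> p u" for u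
    using sub[of u "-u"] hom[of "-1" u] p0 by simp
  have G0A: "G0 \<in> A"
    unfolding A_def G0_def
  proof (intro CollectI conjI allI impI)
    fix a s b t assume "(a,s) \<in> range (\<lambda>c. (c *\<^sub>R v, c * p v))" "(b,t) \<in> range (\<lambda>c. (c *\<^sub>R v, c * p v))"
    then obtain c d where "a = c *\<^sub>R v" "s = c * p v" "b = d *\<^sub>R v" "t = d * p v" by auto
    then show "(a+b,s+t) \<in> range (\<lambda>c. (c *\<^sub>R v, c * p v))"
      by (auto simp: image_iff algebra_simps intro!: exI[of _ "c+d"])
  next
    fix a s c assume "(a,s) \<in> range (\<lambda>c. (c *\<^sub>R v, c * p v))"
    then obtain d where "a = d *\<^sub>R v" "s = d * p v" by auto
    then show "(c *\<^sub>R a, c * s) \<in> range (\<lambda>c. (c *\<^sub>R v, c * p v))"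
      by (auto simp: image_iff algebra_simps intro!: exI[of _ "c*d"])
  next
    fix a s assume "(a,s) \<in> range (\<lambda>c. (c *\<^sub>R v, c * p v))"
    then obtain d where "a = d *\<^sub>R v" "s = d * p v" by auto
    then show "s \<le> p a" using hom[of d v] pnn[of v]
      by (simp add: mult_right_mono)
  next
    show "(v, p v) \<in> range (\<lambda>c. (c *\<^sub>R v, c * p v))"
      by (auto simp: image_iff intro!: exI[of _ 1])
  qed
  have "\<forall>C\<in>chains A. \<exists>U\<in>A. \<forall>X\<in>C. X \<subseteq> U"
  proof
    fix C assume C: "C \<in> chains A"
    show "\<exists>U\<in>A. \<forall>X\<in>C. X \<subseteq> U"
    proof (cases "C = {}")
      case True then show ?thesis using G0A by auto
    next
      case False
      have CA: "C \<subseteq> A" using C chainsD2 by blast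
      have "\<Union>C \<in> A"
        unfolding A_def
      proof (intro CollectI conjI allI impI)
        fix a s b t assume "(a,s) \<in> \<Union>C" "(b,t) \<in> \<Union>C"
        then obtain X1 X2 where X: "X1 \<in> C" "X2 \<in> C" "(a,s)\<in>X1" "(b,t)\<in>X2" by auto
        then have "X1 \<subseteq> X2 \<or> X2 \<subseteq> X1" using C chainsD by blast
        then obtain X where "X \<in> C" "(a,s)\<in>X" "(b,t)\<in>X" using X by blast
        then show "(a+b,s+t) \<in> \<Union>C" using CA unfolding A_def by blast
      next
        fix a s c assume "(a,s) \<in> \<Union>C"
        then obtain X where "X \<in> C" "(a,s)\<in>X" by auto
        then show "(c *\<^sub>R a, c * s) \<in> \<Union>C" using CA unfolding A_def by blast
      next
        fix a s assume "(a,s) \<in> \<Union>C"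
        then obtain X where "X \<in> C" "(a,s)\<in>X" by auto
        then show "s \<le> p a" using CA unfolding A_def by blast
      next
        obtain X where "X \<in> C" using False by auto
        then show "(v, p v) \<in> \<Union>C" using CA unfolding A_def by blast
      qed
      then show ?thesis by auto
    qed
  qed
  from Zorn_Lemma2[OF this] obtain M where M: "M \<in> A" "\<forall>X\<in>A. M \<subseteq> X \<longrightarrow> X = M" by blast
  have Madd: "(a+b,s+t)\<in>M" if "(a,s)\<in>M" "(b,t)\<in>M" for a s b t using M(1) that unfolding A_def by blast
  have Mscale: "(c *\<^sub>R a, c * s)\<in>M" if "(a,s)\<in>M" for a s c using M(1) that unfolding A_def by blast
  have Mdom: "s \<le> p a" if "(a,s)\<in>M" for a s using M(1) that unfolding A_def by blast
  have Mv: "(v, p v) \<in> M" using M(1) unfolding A_def by blast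
  have sv: "s = t" if "(a,s)\<in>M" "(a,t)\<in>M" for a s t
  proof -
    have "(a + (-1) *\<^sub>R a, s + (-1) * t) \<in> M" using Madd[OF that(1) Mscale[OF that(2)]] .
    then have 1: "s - t \<le> 0" using Mdom p0 by fastforce
    have "(a + (-1) *\<^sub>R a, t + (-1) * s) \<in> M" using Madd[OF that(2) Mscale[OF that(1)]] .
    then have 2: "t - s \<le> 0" using Mdom p0 by fastforce
    from 1 2 show ?thesis by simp
  qed
  have dom: "\<exists>s. (w,s)\<in>M" for w
  proof (rule ccontr)
    assume w: "\<not> (\<exists>s. (w,s)\<in>M)"
    define S where "S = {p (a + w) - s | a s. (a,s)\<in>M}"
    define r where "r = Inf S"
    have Sne: "S \<noteq> {}" using Mv unfolding S_def by blast
    have key: "t - p (b - w) \<le> p (a + w) - s" if "(a,s)\<in>M" "(b,t)\<in>M" for a s b t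
    proof -
      have "s + t \<le> p (a + b)" using Mdom[OF Madd[OF that]] .
      also have "\<dots> \<le> p (a + w) + p (b - w)" using sub[of "a+w" "b-w"] by simp
      finally show ?thesis by simp
    qed
    have lower: "t - p (b - w) \<le> r" if "(b,t)\<in>M" for b t
      unfolding r_def using Sne key[OF _ that] unfolding S_def by (auto intro!: cInf_greatest)
    have upper: "r \<le> p (a + w) - s" if "(a,s)\<in>M" for a s
    proof -
      have "bdd_below S" unfolding S_def bdd_below_def
        using key[OF _ Mv] by blast
      then show ?thesis unfolding r_def S_def using that by (auto intro!: cInf_lower)
    qed
    define M' where "M' = {(a + c *\<^sub>R w, s + c*r) | a s c. (a,s)\<in>M}"
    have M'I: "(a + c *\<^sub>R w, s + c * r) \<in> M'" if "(a,s)\<in>M" for a s c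
      unfolding M'_def using that by blast
    have MM': "M \<subseteq> M'" unfolding M'_def by force
    have "M' \<in> A"
      unfolding A_def
    proof (intro CollectI conjI allI impI)
      fix a s b t assume "(a,s) \<in> M'" "(b,t) \<in> M'"
      then obtain a1 s1 c1 a2 s2 c2 where "(a1,s1)\<in>M" "(a2,s2)\<in>M"
        "a = a1 + c1 *\<^sub>R w" "s = s1 + c1*r" "b = a2 + c2 *\<^sub>R w" "t = s2 + c2*r"
        unfolding M'_def by blast
      moreover have "(a1+a2, s1+s2) \<in> M" using Madd calculation by blast
      ultimately show "(a+b,s+t) \<in> M'" using M'I[where a="a1+a2" and c="c1+c2" and s="s1+s2"]
        by (simp add: algebra_simps)
    next
      fix a s c assume "(a,s) \<in> M'"
      then obtain a1 s1 c1 where "(a1,s1)\<in>M" "a = a1 + c1 *\<^sub>R w" "s = s1 + c1*r"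
        unfolding M'_def by blast
      moreover have "(c *\<^sub>R a1, c * s1) \<in> M" using Mscale calculation by blast
      ultimately show "(c *\<^sub>R a, c * s) \<in> M'" using M'I[where a="c *\<^sub>R a1" and c="c*c1" and s="c * s1"]
        by (simp add: algebra_simps)
    next
      fix a s assume "(a,s) \<in> M'"
      then obtain a1 s1 c where as1: "(a1,s1)\<in>M" and a: "a = a1 + c *\<^sub>R w" and s: "s = s1 + c*r"
        unfolding M'_def by blast
      show "s \<le> p a"
      proof (cases c "0::real" rule: linorder_cases)
        case equal then show ?thesis using Mdom[OF as1] a s by simp
      next
        case greater
        have "(inverse c *\<^sub>R a1, inverse c * s1) \<in> M" using Mscale[OF as1] .
        from upper[OF this] have "c * r \<le> c * (p (inverse c *\<^sub>R a1 + w) - inverse c * s1)"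
          using greater by (simp add: mult_left_mono)
        also have "\<dots> = c * p (inverse c *\<^sub>R a1 + w) - s1"
          using greater by (simp add: right_diff_distrib)
        also have "\<dots> = p (c *\<^sub>R (inverse c *\<^sub>R a1 + w)) - s1"
          using hom[of c "inverse c *\<^sub>R a1 + w"] greater by simp
        also have "c *\<^sub>R (inverse c *\<^sub>R a1 + w) = a" using greater a by (simp add: algebra_simps)
        finally show ?thesis using s by simp
      next
        case less
        define d where "d = - c"
        have d: "d > 0" using less d_def by simp
        have "(inverse d *\<^sub>R a1, inverse d * s1) \<in> M" using Mscale[OF as1] .
        from lower[OF this] have "d * (inverse d * s1 - p (inverse d *\<^sub>R a1 - w)) \<le> d * r"
          using d by (simp add: mult_left_mono)
        moreover have "d * (inverse d * s1 - p (inverse d *\<^sub>R a1 - w)) = s1 - d * p (inverse d *\<^sub>R a1 - w)"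
          using d by (simp add: right_diff_distrib)
        moreover have "d * p (inverse d *\<^sub>R a1 - w) = p (d *\<^sub>R (inverse d *\<^sub>R a1 - w))"
          using hom[of d "inverse d *\<^sub>R a1 - w"] d by simp
        moreover have "d *\<^sub>R (inverse d *\<^sub>R a1 - w) = a" using d a d_def by (simp add: algebra_simps)
        ultimately show ?thesis using s d_def by simp
      qed
    next
      show "(v, p v) \<in> M'" using MM' Mv by blast
    qed
    with M(2) MM' have "M' = M" by blast
    moreover have "(0,0) \<in> M" using Mscale[OF Mv, of 0] by simp
    then have "(w, r) \<in> M'" using M'I[where a=0 and c=1 and s=0] by simp
    ultimately show False using w by blast
  qed
  define h where "h u = (THE s. (u,s)\<in>M)" for u
  have hM: "(u, h u) \<in> M" for u
    unfolding h_def using dom[of u] sv by (metis theI)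
  have hu: "h u = s" if "(u,s)\<in>M" for u s using sv[OF hM that] .
  have "linear h"
    unfolding linear_iff
    using hu Madd[OF hM hM] Mscale[OF hM] by auto
  moreover have "\<forall>u. h u \<le> p u" using Mdom hM by blast
  moreover have "h v = p v" using hu[OF Mv] .
  ultimately show ?thesis by blast
qed



lemma norming_functional:
  fixes v :: "'a::real_normed_vector"
  shows "\<exists>h. bounded_linear h \<and> (\<forall>u. h u \<le> norm u) \<and> h v = norm v"
proof -
  obtain h where h: "linear h" "\<forall>u. h u \<le> norm u" "h v = norm v"
    using HB_seminorm[of norm v] by (auto simp: norm_triangle_ineq)
  have "bounded_linear h"
  proof (rule bounded_linear_intro[where K=1])
    show "h (x + y) = h x + h y" for x y using h(1) by (simp add: linear_add)
    show "h (r *\<^sub>R x) = r *\<^sub>R h x" for r x using h(1) by (simp add: linear_scale)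
    show "norm (h x) \<le> norm x * 1" for x
      using h(2)[rule_format, of x] h(2)[rule_format, of "-x"] linear_neg[OF h(1), of x] by auto
  qed
  then show ?thesis using h by blast
qed

lemma infdist_subspace_add:
  fixes Y :: "'a::real_normed_vector set"
  assumes "subspace Y"
  shows "infdist (u + w) Y \<le> infdist u Y + infdist w Y"
proof -
  have Yne: "Y \<noteq> {}" using subspace_0[OF assms] by blast
  have "infdist (u + w) Y - infdist w Y \<le> infdist u Y"
    unfolding infdist_notempty[OF Yne, of u]
  proof (rule cINF_greatest[OF Yne])
    fix a assume a: "a \<in> Y"
    have "infdist (u + w) Y - dist u a \<le> infdist w Y"
      unfolding infdist_notempty[OF Yne, of w]
    proof (rule cINF_greatest[OF Yne])
      fix b assume b: "b \<in> Y"
      have "infdist (u + w) Y \<le> dist (u + w) (a + b)"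
        by (rule infdist_le) (use a b assms in \<open>simp add: subspace_add\<close>)
      also have "\<dots> \<le> dist u a + dist w b"
        unfolding dist_norm using norm_triangle_ineq[of "u - a" "w - b"] by (simp add: algebra_simps)
      finally show "infdist (u + w) Y - dist u a \<le> dist w b" by simp
    qed
    then show "infdist (u + w) Y - infdist w Y \<le> dist u a" by simp
  qed
  then show ?thesis by simp
qed

lemma infdist_subspace_scale_le:
  fixes Y :: "'a::real_normed_vector set"
  assumes "subspace Y"
  shows "infdist (c *\<^sub>R u) Y \<le> \<bar>c\<bar> * infdist u Y"
proof -
  have Yne: "Y \<noteq> {}" using subspace_0[OF assms] by blast
  show ?thesis
  proof (cases "c = 0")
    case True then show ?thesis using subspace_0[OF assms] by simp
  next
    case False
    have "infdist (c *\<^sub>R u) Y / \<bar>c\<bar> \<le> infdist u Y"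
      unfolding infdist_notempty[OF Yne, of u]
    proof (rule cINF_greatest[OF Yne])
      fix a assume a: "a \<in> Y"
      have "infdist (c *\<^sub>R u) Y \<le> dist (c *\<^sub>R u) (c *\<^sub>R a)"
        by (rule infdist_le) (use a assms in \<open>simp add: subspace_mul\<close>)
      also have "\<dots> = \<bar>c\<bar> * dist u a"
        by (simp add: dist_norm scaleR_diff_right[symmetric])
      finally show "infdist (c *\<^sub>R u) Y / \<bar>c\<bar> \<le> dist u a" using False
        by (simp add: divide_le_eq mult.commute)
    qed
    then show ?thesis using False by (simp add: divide_le_eq mult.commute)
  qed
qed

lemma separate_subspace:
  fixes Y :: "'a::real_normed_vector set"
  assumes Y: "subspace Y" "closed Y" and l: "l \<notin> Y"
  shows "\<exists>h::'a\<Rightarrow>real. bounded_linear h \<and> (\<forall>y\<in>Y. h y = 0) \<and> h l \<noteq> 0"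
proof -
  let ?p = "\<lambda>u. infdist u Y"
  have Yne: "Y \<noteq> {}" using subspace_0[OF Y(1)] by blast
  have hom: "?p (c *\<^sub>R u) = \<bar>c\<bar> * ?p u" for c u
  proof (cases "c = 0")
    case True then show ?thesis using subspace_0[OF Y(1)] by simp
  next
    case False
    have "?p u = ?p (inverse c *\<^sub>R (c *\<^sub>R u))" using False by simp
    also have "\<dots> \<le> \<bar>inverse c\<bar> * ?p (c *\<^sub>R u)" by (rule infdist_subspace_scale_le[OF Y(1)])
    finally have "\<bar>c\<bar> * ?p u \<le> \<bar>c\<bar> * (\<bar>inverse c\<bar> * ?p (c *\<^sub>R u))"
      by (rule mult_left_mono) simp
    also have "\<bar>c\<bar> * (\<bar>inverse c\<bar> * ?p (c *\<^sub>R u)) = (\<bar>c\<bar> * \<bar>inverse c\<bar>) * ?p (c *\<^sub>R u)"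
      by (simp only: mult.assoc)
    also have "\<bar>c\<bar> * \<bar>inverse c\<bar> = 1" using False by (simp add: abs_mult[symmetric])
    finally have "\<bar>c\<bar> * ?p u \<le> ?p (c *\<^sub>R u)" by simp
    then show ?thesis using infdist_subspace_scale_le[OF Y(1), of c u] by simp
  qed
  have "\<exists>h. linear h \<and> (\<forall>u. h u \<le> ?p u) \<and> h l = ?p l"
    by (rule HB_seminorm[where p="?p"]) (rule infdist_subspace_add[OF Y(1)], rule hom)
  then obtain h where h: "linear h" "\<forall>u. h u \<le> ?p u" "h l = ?p l" by blast
  have pn: "?p u \<le> norm u" for u using infdist_le[OF subspace_0[OF Y(1)], of u] by simp
  have "bounded_linear h"
  proof (rule bounded_linear_intro[where K=1])
    show "h (x + y) = h x + h y" for x y using h(1) by (simp add: linear_add)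
    show "h (r *\<^sub>R x) = r *\<^sub>R h x" for r x using h(1) by (simp add: linear_scale)
    show "norm (h x) \<le> norm x * 1" for x
    proof -
      have 1: "h x \<le> norm x" using h(2)[rule_format, of x] pn[of x] by linarith
      have "h (-x) \<le> norm x" using h(2)[rule_format, of "-x"] pn[of "-x"] by simp
      then have 2: "- h x \<le> norm x" using linear_neg[OF h(1), of x] by simp
      show ?thesis using 1 2 by (simp add: abs_le_iff)
    qed
  qed
  moreover have "\<forall>y\<in>Y. h y = 0"
  proof
    fix y assume y: "y \<in> Y"
    have "-y \<in> Y" using y Y(1) by (simp add: subspace_neg)
    have a: "h y \<le> 0" using h(2)[rule_format, of y] y by simp
    have "h (-y) \<le> 0" using h(2)[rule_format, of "-y"] \<open>-y \<in> Y\<close> by simp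
    then have b: "- h y \<le> 0" using linear_neg[OF h(1), of y] by simp
    show "h y = 0" using a b by linarith
  qed
  moreover have "h l \<noteq> 0" using h(3) infdist_pos_not_in_closed[OF Y(2) Yne l] by simp
  ultimately show ?thesis by (intro exI[of _ h] conjI)
qed


lemma limitin_functional:
  fixes \<tau> :: "'a::real_normed_vector topology" and \<phi> :: "'a \<Rightarrow> real"
  assumes tau: "\<tau> = euclidean \<or> \<tau> = weak_topology" and lim: "limitin \<tau> g l F" and phi: "bounded_linear \<phi>"
  shows "((\<lambda>n. \<phi> (g n)) \<longlongrightarrow> \<phi> l) F"
proof (cases "\<tau> = euclidean")
  case True
  then have "(g \<longlongrightarrow> l) F" using lim by simp
  then show ?thesis by (rule bounded_linear.tendsto[OF phi])
next
  case False
  then have tw: "\<tau> = weak_topology" using tau by simp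
  show ?thesis
  proof (rule topological_tendstoI)
    fix S assume S: "open S" "\<phi> l \<in> S"
    have mem: "{x. \<phi> x \<in> S} \<in> {{x. l x \<in> U} | l U. bounded_linear (l :: 'a \<Rightarrow> real) \<and> open U}"
      using S(1) phi by blast
    have "openin weak_topology {x. \<phi> x \<in> S}"
      unfolding weak_topology_def by (rule topology_generated_by_Basis[OF mem])
    moreover have "l \<in> {x. \<phi> x \<in> S}" using S(2) by simp
    moreover have L: "\<And>U. openin weak_topology U \<Longrightarrow> l \<in> U \<Longrightarrow> eventually (\<lambda>n. g n \<in> U) F"
      using lim tw unfolding limitin_def by blast
    ultimately have "eventually (\<lambda>n. g n \<in> {x. \<phi> x \<in> S}) F"
      by blast
    then show "eventually (\<lambda>n. \<phi> (g n) \<in> S) F" by simp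
  qed
qed


lemma cwm_shift:
  assumes f: "cwm N f" and a: "a \<in> nonneg_orthant N" and b: "b \<in> nonneg_orthant N"
    and d: "0 \<le> d" "d \<le> 1" and ab: "\<forall>i<N. a i \<le> b i + d"
  shows "f a \<le> f b + d * f (\<lambda>i. if i<N then b i + 1 else 0)"
proof -
  define b1 where "b1 = (\<lambda>i. if i<N then b i + 1 else (0::real))"
  define c where "c = (\<lambda>i. d * b1 i + (1 - d) * b i)"
  have b1o: "b1 \<in> nonneg_orthant N" using b unfolding b1_def nonneg_orthant_def by auto
  have cval: "c i = (if i<N then b i + d else 0)" for i
    using b unfolding c_def b1_def nonneg_orthant_def by (auto simp: algebra_simps)
  have co: "c \<in> nonneg_orthant N" using b d unfolding nonneg_orthant_def cval by auto
  have conv: "f c \<le> d * f b1 + (1 - d) * f b"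
    using f b1o b d unfolding cwm_def c_def by blast
  have mono: "f a \<le> f c" using f a co ab unfolding cwm_def cval by auto
  have fb: "0 \<le> f b" using f b unfolding cwm_def by blast
  have "(1 - d) * f b \<le> f b" using fb d by (simp add: mult_left_le_one_le)
  then show ?thesis using mono conv unfolding b1_def by linarith
qed

lemma cwm_growth:
  assumes f: "cwm N f" and N: "N \<ge> 1"
  shows "\<exists>m>0. \<forall>t\<ge>1. \<forall>a\<in>nonneg_orthant N. (\<forall>i<N. t \<le> a i) \<longrightarrow> t * m \<le> f a"
proof -
  define z where "z t = (\<lambda>i. if i<N then t else (0::real))" for t
  have zo: "t \<ge> 0 \<Longrightarrow> z t \<in> nonneg_orthant N" for t unfolding z_def nonneg_orthant_def by auto
  define m where "m = f (z 1) - f (z 0)"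
  have "f (z 0) < f (z 1)" using f zo[of 0] zo[of 1] unfolding cwm_def z_def by auto
  then have m: "m > 0" unfolding m_def by simp
  have f0: "0 \<le> f (z 0)" using f zo[of 0] unfolding cwm_def by auto
  have grow: "t * m \<le> f (z t)" if t: "t \<ge> 1" for t
  proof -
    have eq: "(\<lambda>i. (1/t) * z t i + (1 - 1/t) * z 0 i) = z 1"
      using t by (auto simp: z_def)
    have cv: "\<And>a b s. a \<in> nonneg_orthant N \<Longrightarrow> b \<in> nonneg_orthant N \<Longrightarrow> 0 \<le> s \<Longrightarrow> s \<le> 1 \<Longrightarrow>
        f (\<lambda>i. s * a i + (1 - s) * b i) \<le> s * f a + (1 - s) * f b"
      using f unfolding cwm_def by blast
    have "f (\<lambda>i. (1/t) * z t i + (1 - 1/t) * z 0 i) \<le> (1/t) * f (z t) + (1 - 1/t) * f (z 0)"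
      by (rule cv) (use zo[of t] zo[of 0] t in auto)
    then have "f (z 1) \<le> (1/t) * f (z t) + (1 - 1/t) * f (z 0)" using eq by simp
    then have "t * f (z 1) \<le> t * ((1/t) * f (z t) + (1 - 1/t) * f (z 0))"
      using t by (simp add: mult_left_mono)
    also have "\<dots> = f (z t) + (t - 1) * f (z 0)" using t by (simp add: algebra_simps)
    finally have "t * f (z 1) \<le> f (z t) + (t - 1) * f (z 0)" .
    then have "t * m \<le> f (z t) - f (z 0)" unfolding m_def by (simp add: algebra_simps)
    then show ?thesis using f0 by linarith
  qed
  show ?thesis
  proof (intro exI[of _ m] conjI allI impI ballI)
    fix t a assume t: "1 \<le> t" and a: "a \<in> nonneg_orthant N" and ta: "\<forall>i<N. t \<le> a i"
    have "f (z t) \<le> f a" using f zo[of t] t a ta unfolding cwm_def z_def by auto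
    then show "t * m \<le> f a" using grow[OF t] by linarith
  qed (use m in auto)
qed

lemma av_orth: "(\<lambda>i. if i<N then norm (y - x i) else 0) \<in> nonneg_orthant N"
  unfolding nonneg_orthant_def by auto

lemma r_f_nonneg: "cwm N f \<Longrightarrow> 0 \<le> r_f f N x y"
  unfolding r_f_def cwm_def using av_orth by blast

lemma rad_le: "cwm N f \<Longrightarrow> y \<in> Y \<Longrightarrow> rad_f Y f N x \<le> r_f f N x y"
  unfolding rad_f_def by (rule cINF_lower) (auto intro: r_f_nonneg simp: bdd_below_def)

lemma rad_approx: "cwm N f \<Longrightarrow> Y \<noteq> {} \<Longrightarrow> e > 0 \<Longrightarrow> \<exists>y\<in>Y. r_f f N x y < rad_f Y f N x + e"
  unfolding rad_f_def
  by (subst cINF_less_iff[symmetric]) (auto intro: r_f_nonneg simp: bdd_below_def)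

lemma r_f_shift:
  assumes f: "cwm N f" and d: "0 \<le> d" "d \<le> 1" and xx: "\<forall>i<N. norm (x i - x' i) \<le> d"
  shows "r_f f N x' y \<le> r_f f N x y + d * f (\<lambda>i. if i<N then norm (y - x i) + 1 else 0)"
proof -
  have "r_f f N x' y \<le> r_f f N x y + d * f (\<lambda>i. if i<N then (if i<N then norm (y - x i) else 0) + 1 else 0)"
    unfolding r_f_def
  proof (rule cwm_shift[OF f av_orth av_orth d])
    show "\<forall>i<N. (if i < N then norm (y - x' i) else 0) \<le> (if i < N then norm (y - x i) else 0) + d"
    proof (intro allI impI)
      fix i assume i: "i < N"
      have "norm (y - x' i) \<le> norm (y - x i) + norm (x i - x' i)"
        using norm_triangle_ineq[of "y - x i" "x i - x' i"] by simp
      then show "(if i < N then norm (y - x' i) else 0) \<le> (if i < N then norm (y - x i) else 0) + d"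
        using xx i by auto
    qed
  qed
  then show ?thesis by (simp cong: if_cong)
qed



theorem theorem4p5:
  fixes \<tau> :: "'a::banach topology" and Y :: "'a set"
  assumes tau: "\<tau> = euclidean \<or> \<tau> = weak_topology"
    and Y: "subspace Y" "closed Y"
    and sacp: "SACP_cwm \<tau> Y"
    and N: "N \<ge> 1"
    and f: "cwm N f"
  shows "\<forall>x :: nat \<Rightarrow> 'a. inj_on x {..<N} \<longrightarrow>
           (\<forall>W. openin \<tau> W \<and> Cent_f Y f N x \<subseteq> W \<longrightarrow>
              (\<exists>e>0. \<forall>x' :: nat \<Rightarrow> 'a. inj_on x' {..<N} \<and> (\<forall>i<N. norm (x i - x' i) < e) \<longrightarrow>
                 Cent_f Y f N x' \<subseteq> W))"
proof (intro allI impI)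
  fix x :: "nat \<Rightarrow> 'a" assume xinj: "inj_on x {..<N}"
  fix W assume "openin \<tau> W \<and> Cent_f Y f N x \<subseteq> W"
  then have Wo: "openin \<tau> W" and CW: "Cent_f Y f N x \<subseteq> W" by auto
  show "\<exists>e>0. \<forall>x' :: nat \<Rightarrow> 'a. inj_on x' {..<N} \<and> (\<forall>i<N. norm (x i - x' i) < e) \<longrightarrow>
                 Cent_f Y f N x' \<subseteq> W"
  proof (rule ccontr)
    assume neg: "\<not> (\<exists>e>0. \<forall>x' :: nat \<Rightarrow> 'a. inj_on x' {..<N} \<and> (\<forall>i<N. norm (x i - x' i) < e) \<longrightarrow>
                 Cent_f Y f N x' \<subseteq> W)"
    define \<delta> where "\<delta> n = inverse (real (Suc n))" for n
    have \<delta>pos: "0 < \<delta> n" for n unfolding \<delta>_def by simp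
    have \<delta>1: "\<delta> n \<le> 1" for n unfolding \<delta>_def by (simp add: inverse_le_1_iff)
    have "\<forall>n. \<exists>x'. \<exists>y. (\<forall>i<N. norm (x i - x' i) < \<delta> n) \<and> y \<in> Cent_f Y f N x' \<and> y \<notin> W"
    proof
      fix n
      from neg \<delta>pos[of n] obtain x' where "(\<forall>i<N. norm (x i - x' i) < \<delta> n)" "\<not> Cent_f Y f N x' \<subseteq> W"
        by blast
      then show "\<exists>x'. \<exists>y. (\<forall>i<N. norm (x i - x' i) < \<delta> n) \<and> y \<in> Cent_f Y f N x' \<and> y \<notin> W" by blast
    qed
    from choice[OF this] obtain X where "\<forall>n. \<exists>y. (\<forall>i<N. norm (x i - X n i) < \<delta> n) \<and> y \<in> Cent_f Y f N (X n) \<and> y \<notin> W"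
      by blast
    from choice[OF this] obtain yy where XY: "\<forall>n. (\<forall>i<N. norm (x i - X n i) < \<delta> n) \<and> yy n \<in> Cent_f Y f N (X n) \<and> yy n \<notin> W"
      by blast
    have yyY: "yy n \<in> Y" for n using XY unfolding Cent_f_def by blast
    have yyr: "r_f f N (X n) (yy n) = rad_f Y f N (X n)" for n using XY unfolding Cent_f_def by blast
    have yyW: "yy n \<notin> W" for n using XY by blast
    have Xd: "\<forall>i<N. norm (x i - X n i) \<le> \<delta> n" for n using XY less_imp_le by blast
    have Xd': "\<forall>i<N. norm (X n i - x i) \<le> \<delta> n" for n using Xd by (simp add: norm_minus_commute)
    define K where "K = Max ((\<lambda>i. norm (x i)) ` {..<N})"
    have Kx: "norm (x i) \<le> K" if "i < N" for i unfolding K_def using that by (intro Max_ge) auto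
    have "0 < N" using N by simp
    then have "norm (x 0) \<le> K" by (rule Kx)
    then have K0: "0 \<le> K" using norm_ge_zero[of "x 0"] by linarith
    have XK: "norm (X n i) \<le> K + 1" if "i < N" for n i
    proof -
      have "norm (X n i) \<le> norm (x i) + norm (x i - X n i)"
        using norm_triangle_ineq4[of "x i" "x i - X n i"] by simp
      then show ?thesis using Kx[OF that] Xd[of n] \<delta>1[of n] that by fastforce
    qed
    define z where "z t = (\<lambda>i. if i<N then t else (0::real))" for t
    have zo: "0 \<le> t \<Longrightarrow> z t \<in> nonneg_orthant N" for t unfolding z_def nonneg_orthant_def by auto
    have fmono: "\<And>a b. a \<in> nonneg_orthant N \<Longrightarrow> b \<in> nonneg_orthant N \<Longrightarrow> (\<forall>i<N. a i \<le> b i) \<Longrightarrow> f a \<le> f b"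
      using f unfolding cwm_def by blast
    have fnn: "\<And>a. a \<in> nonneg_orthant N \<Longrightarrow> 0 \<le> f a" using f unfolding cwm_def by blast
    define M0 where "M0 = f (z (K + 1))"
    have M0nn: "0 \<le> M0" unfolding M0_def using fnn zo K0 by simp
    have Y0: "0 \<in> Y" using subspace_0[OF Y(1)] .
    have Yne: "Y \<noteq> {}" using Y0 by blast
    have radX: "rad_f Y f N (X n) \<le> M0" for n
    proof -
      have "rad_f Y f N (X n) \<le> r_f f N (X n) 0" by (rule rad_le[OF f Y0])
      also have "\<dots> \<le> M0" unfolding r_f_def M0_def
        by (rule fmono[OF av_orth zo]) (use K0 XK in \<open>auto simp: z_def\<close>)
      finally show ?thesis .
    qed
    obtain m where m: "m > 0" "\<forall>t\<ge>1. \<forall>a\<in>nonneg_orthant N. (\<forall>i<N. t \<le> a i) \<longrightarrow> t * m \<le> f a"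
      using cwm_growth[OF f N] by blast
    define B where "B = K + 2 + M0 / m"
    have B0: "0 \<le> B" unfolding B_def using K0 M0nn m(1) by simp
    have yB: "norm (yy n) \<le> B" for n
    proof (rule ccontr)
      assume "\<not> norm (yy n) \<le> B"
      then have big: "norm (yy n) > B" by simp
      define t where "t = norm (yy n) - K - 1"
      have "0 \<le> M0 / m" using M0nn m(1) by simp
      then have t1: "t \<ge> 1" using big unfolding t_def B_def by linarith
      have "\<forall>i<N. t \<le> (if i<N then norm (yy n - X n i) else 0)"
      proof (intro allI impI)
        fix i assume i: "i < N"
        have "norm (yy n) - norm (X n i) \<le> norm (yy n - X n i)" by (rule norm_triangle_ineq2)
        then show "t \<le> (if i<N then norm (yy n - X n i) else 0)" using XK[OF i, of n] i unfolding t_def by simp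
      qed
      moreover have "\<forall>a\<in>nonneg_orthant N. (\<forall>i<N. t \<le> a i) \<longrightarrow> t * m \<le> f a"
        using m(2) t1 by blast
      then have "(\<forall>i<N. t \<le> (if i<N then norm (yy n - X n i) else 0)) \<longrightarrow> t * m \<le> f (\<lambda>i. if i<N then norm (yy n - X n i) else 0)"
        using av_orth[of N "yy n" "X n"] by (rule bspec)
      ultimately have "t * m \<le> r_f f N (X n) (yy n)" unfolding r_f_def by (rule rev_mp)
      also have "\<dots> \<le> M0" using yyr radX by simp
      finally have "t \<le> M0 / m" using m(1) by (simp add: pos_le_divide_eq)
      then show False using big unfolding t_def B_def by simp
    qed
    define C1 where "C1 = f (z (B + K + 2))"
    have C1nn: "0 \<le> C1" unfolding C1_def using fnn zo B0 K0 by simp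
    have C1b: "f (\<lambda>i. if i<N then norm (yy n - X n i) + 1 else 0) \<le> C1" for n
      unfolding C1_def
    proof (rule fmono)
      show "(\<lambda>i. if i<N then norm (yy n - X n i) + 1 else 0) \<in> nonneg_orthant N"
        unfolding nonneg_orthant_def by auto
      show "z (B + K + 2) \<in> nonneg_orthant N" using zo B0 K0 by simp
      show "\<forall>i<N. (if i<N then norm (yy n - X n i) + 1 else 0) \<le> z (B + K + 2) i"
      proof (intro allI impI)
        fix i assume i: "i < N"
        have "norm (yy n - X n i) \<le> norm (yy n) + norm (X n i)" by (rule norm_triangle_ineq4)
        then show "(if i<N then norm (yy n - X n i) + 1 else 0) \<le> z (B + K + 2) i"
          using i yB[of n] XK[OF i, of n] unfolding z_def by simp
      qed
    qed
    have C1c: "f (\<lambda>i. if i<N then norm (yy n - x i) + 1 else 0) \<le> C1" for n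
      unfolding C1_def
    proof (rule fmono)
      show "(\<lambda>i. if i<N then norm (yy n - x i) + 1 else 0) \<in> nonneg_orthant N"
        unfolding nonneg_orthant_def by auto
      show "z (B + K + 2) \<in> nonneg_orthant N" using zo B0 K0 by simp
      show "\<forall>i<N. (if i<N then norm (yy n - x i) + 1 else 0) \<le> z (B + K + 2) i"
      proof (intro allI impI)
        fix i assume i: "i < N"
        have "norm (yy n - x i) \<le> norm (yy n) + norm (x i)" by (rule norm_triangle_ineq4)
        then show "(if i<N then norm (yy n - x i) + 1 else 0) \<le> z (B + K + 2) i"
          using i yB[of n] Kx[OF i] unfolding z_def by simp
      qed
    qed
    have up: "r_f f N x (yy n) \<le> r_f f N x y + \<delta> n * (f (\<lambda>i. if i<N then norm (y - x i) + 1 else 0) + C1)"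
      if y: "y \<in> Y" for y n
    proof -
      have "r_f f N x (yy n) \<le> r_f f N (X n) (yy n) + \<delta> n * f (\<lambda>i. if i<N then norm (yy n - X n i) + 1 else 0)"
        by (rule r_f_shift[OF f less_imp_le[OF \<delta>pos] \<delta>1 Xd'])
      also have "\<dots> \<le> rad_f Y f N (X n) + \<delta> n * C1"
        using yyr C1b[of n] \<delta>pos[of n] by (simp add: mult_left_mono)
      also have "rad_f Y f N (X n) \<le> r_f f N (X n) y" by (rule rad_le[OF f y])
      also have "r_f f N (X n) y \<le> r_f f N x y + \<delta> n * f (\<lambda>i. if i<N then norm (y - x i) + 1 else 0)"
        by (rule r_f_shift[OF f less_imp_le[OF \<delta>pos] \<delta>1 Xd])
      finally show ?thesis by (simp add: algebra_simps)
    qed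
    have conv: "(\<lambda>n. r_f f N x (yy n)) \<longlonglongrightarrow> rad_f Y f N x"
    proof (rule order_tendstoI)
      fix a assume "a < rad_f Y f N x"
      then show "eventually (\<lambda>n. a < r_f f N x (yy n)) sequentially"
        using rad_le[OF f yyY] by (auto intro: always_eventually less_le_trans)
    next
      fix a assume a: "rad_f Y f N x < a"
      obtain y where y: "y \<in> Y" "r_f f N x y < rad_f Y f N x + (a - rad_f Y f N x) / 2"
        using rad_approx[OF f Yne, of "(a - rad_f Y f N x) / 2" x] a by auto
      define Fy where "Fy = f (\<lambda>i. if i<N then norm (y - x i) + 1 else 0)"
      have "(\<lambda>n. \<delta> n * (Fy + C1)) \<longlonglongrightarrow> 0"
        unfolding \<delta>_def by (intro tendsto_mult_left_zero LIMSEQ_inverse_real_of_nat)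
      then have "eventually (\<lambda>n. \<delta> n * (Fy + C1) < (a - rad_f Y f N x) / 2) sequentially"
        using a by (intro order_tendstoD(2)) auto
      then show "eventually (\<lambda>n. r_f f N x (yy n) < a) sequentially"
      proof (rule eventually_mono)
        fix n assume "\<delta> n * (Fy + C1) < (a - rad_f Y f N x) / 2"
        define D where "D = \<delta> n * (Fy + C1)"
        have 1: "r_f f N x (yy n) \<le> r_f f N x y + D" using up[OF y(1), of n] unfolding D_def Fy_def .
        have 2: "D < (a - rad_f Y f N x) / 2" unfolding D_def by fact
        define R where "R = rad_f Y f N x"
        define Q where "Q = r_f f N x y"
        define P where "P = r_f f N x (yy n)"
        have "P \<le> Q + D" "D < (a - R) / 2" "Q < R + (a - R) / 2"
          using 1 2 y(2) unfolding P_def Q_def R_def by simp_all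
        then have "P < a" by argo
        then show "r_f f N x (yy n) < a" unfolding P_def .
      qed
    qed
    have "N \<ge> 1 \<and> inj_on x {..<N} \<and> cwm N f \<and> (\<forall>n. yy n \<in> Y) \<and> (\<lambda>n. r_f f N x (yy n)) \<longlonglongrightarrow> rad_f Y f N x"
      using N xinj f yyY conv by blast
    moreover have S: "\<forall>N x f (y :: nat \<Rightarrow> 'a). N \<ge> 1 \<and> inj_on x {..<N} \<and> cwm N f \<and> (\<forall>n. y n \<in> Y) \<and>
        (\<lambda>n. r_f f N x (y n)) \<longlonglongrightarrow> rad_f Y f N x \<longrightarrow>
        (\<exists>r l. strict_mono r \<and> limitin \<tau> (y \<circ> r) l sequentially)"
      using sacp by (simp only: SACP_cwm_def)
    ultimately have "\<exists>r l. strict_mono r \<and> limitin \<tau> (yy \<circ> r) l sequentially"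
      by (rule_tac S[rule_format])
    then obtain r l where rl: "strict_mono r" "limitin \<tau> (yy \<circ> r) l sequentially"
      by blast
    have lim\<phi>: "(\<lambda>n. \<phi> (yy (r n))) \<longlonglongrightarrow> \<phi> l" if "bounded_linear \<phi>" for \<phi> :: "'a \<Rightarrow> real"
      using limitin_functional[OF tau rl(2) that] by (simp add: o_def)
    have lY: "l \<in> Y"
    proof (rule ccontr)
      assume "l \<notin> Y"
      then obtain h :: "'a \<Rightarrow> real" where h: "bounded_linear h" "\<forall>y\<in>Y. h y = 0" "h l \<noteq> 0"
        using separate_subspace[OF Y] by blast
      have "(\<lambda>n. h (yy (r n))) \<longlonglongrightarrow> h l" by (rule lim\<phi>[OF h(1)])
      moreover have "(\<lambda>n. h (yy (r n))) = (\<lambda>n. 0)" using h(2) yyY by auto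
      ultimately have "(\<lambda>n. 0::real) \<longlonglongrightarrow> h l" by simp
      then have "h l = 0" by (simp add: LIMSEQ_const_iff)
      then show False using h(3) by simp
    qed
    have "\<forall>i. \<exists>h :: 'a \<Rightarrow> real. bounded_linear h \<and> (\<forall>u. h u \<le> norm u) \<and> h (l - x i) = norm (l - x i)"
      using norming_functional by blast
    from choice[OF this] obtain \<phi> :: "nat \<Rightarrow> 'a \<Rightarrow> real" where \<phi>: "\<forall>i. bounded_linear (\<phi> i) \<and> (\<forall>u. \<phi> i u \<le> norm u) \<and> \<phi> i (l - x i) = norm (l - x i)"
      by blast
    have rl_le: "r_f f N x l \<le> rad_f Y f N x"
    proof (rule field_le_epsilon)
      fix e :: real assume e: "0 < e"
      define \<epsilon> where "\<epsilon> = min 1 (e / (1 + C1))"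
      have \<epsilon>0: "0 < \<epsilon>" unfolding \<epsilon>_def using e C1nn by simp
      have \<epsilon>1: "\<epsilon> \<le> 1" unfolding \<epsilon>_def by simp
      have "\<epsilon> \<le> e / (1 + C1)" unfolding \<epsilon>_def by simp
      then have \<epsilon>e: "\<epsilon> * (1 + C1) \<le> e" using C1nn by (simp add: pos_le_divide_eq)
      have ev1: "eventually (\<lambda>n. \<forall>i\<in>{..<N}. norm (l - x i) < norm (yy (r n) - x i) + \<epsilon>) sequentially"
      proof (rule eventually_ball_finite)
        show "finite {..<N}" by simp
        show "\<forall>i\<in>{..<N}. eventually (\<lambda>n. norm (l - x i) < norm (yy (r n) - x i) + \<epsilon>) sequentially"
        proof
          fix i assume "i \<in> {..<N}"
          have bl: "bounded_linear (\<phi> i)" using \<phi> by blast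
          have "(\<lambda>n. \<phi> i (yy (r n)) - \<phi> i (x i)) \<longlonglongrightarrow> \<phi> i l - \<phi> i (x i)"
            by (intro tendsto_diff lim\<phi>[OF bl] tendsto_const)
          moreover have "\<phi> i l - \<phi> i (x i) = norm (l - x i)"
            using \<phi> linear_diff[OF bounded_linear.linear[OF bl], of l "x i"] by simp
          ultimately have "(\<lambda>n. \<phi> i (yy (r n)) - \<phi> i (x i)) \<longlonglongrightarrow> norm (l - x i)" by simp
          then have "eventually (\<lambda>n. norm (l - x i) - \<epsilon> < \<phi> i (yy (r n)) - \<phi> i (x i)) sequentially"
            using \<epsilon>0 by (intro order_tendstoD(1)) auto
          then show "eventually (\<lambda>n. norm (l - x i) < norm (yy (r n) - x i) + \<epsilon>) sequentially"
          proof (rule eventually_mono)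
            fix n assume A: "norm (l - x i) - \<epsilon> < \<phi> i (yy (r n)) - \<phi> i (x i)"
            have "\<phi> i (yy (r n)) - \<phi> i (x i) = \<phi> i (yy (r n) - x i)"
              using linear_diff[OF bounded_linear.linear[OF bl]] by simp
            also have "\<dots> \<le> norm (yy (r n) - x i)" using \<phi> by blast
            finally show "norm (l - x i) < norm (yy (r n) - x i) + \<epsilon>" using A by simp
          qed
        qed
      qed
      have "(\<lambda>n. r_f f N x (yy (r n))) \<longlonglongrightarrow> rad_f Y f N x"
        using LIMSEQ_subseq_LIMSEQ[OF conv rl(1)] by (simp add: o_def)
      then have ev2: "eventually (\<lambda>n. r_f f N x (yy (r n)) < rad_f Y f N x + \<epsilon>) sequentially"
        using \<epsilon>0 by (intro order_tendstoD(2)) auto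
      from eventually_conj[OF ev1 ev2] obtain n where
        n1: "\<forall>i\<in>{..<N}. norm (l - x i) < norm (yy (r n) - x i) + \<epsilon>" and
        n2: "r_f f N x (yy (r n)) < rad_f Y f N x + \<epsilon>"
        unfolding eventually_sequentially by blast
      have n1': "\<forall>i<N. (if i<N then norm (l - x i) else 0) \<le> (if i<N then norm (yy (r n) - x i) else 0) + \<epsilon>"
      proof (intro allI impI)
        fix i assume i: "i < N"
        then have "i \<in> {..<N}" by simp
        then have "norm (l - x i) < norm (yy (r n) - x i) + \<epsilon>" using n1 by blast
        then show "(if i<N then norm (l - x i) else 0) \<le> (if i<N then norm (yy (r n) - x i) else 0) + \<epsilon>"
          using i by simp
      qed
      have "f (\<lambda>i. if i<N then norm (l - x i) else 0) \<le> f (\<lambda>i. if i<N then norm (yy (r n) - x i) else 0)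
          + \<epsilon> * f (\<lambda>i. if i<N then (if i<N then norm (yy (r n) - x i) else 0) + 1 else 0)"
        by (rule cwm_shift[OF f av_orth av_orth less_imp_le[OF \<epsilon>0] \<epsilon>1 n1'])
      also have "(\<lambda>i. if i<N then (if i<N then norm (yy (r n) - x i) else 0) + 1 else 0)
          = (\<lambda>i. if i<N then norm (yy (r n) - x i) + 1 else (0::real))" by auto
      finally have "r_f f N x l \<le> r_f f N x (yy (r n)) + \<epsilon> * f (\<lambda>i. if i<N then norm (yy (r n) - x i) + 1 else 0)"
        unfolding r_f_def .
      also have "\<dots> \<le> r_f f N x (yy (r n)) + \<epsilon> * C1"
        using C1c[of "r n"] \<epsilon>0 by (simp add: mult_left_mono)
      finally show "r_f f N x l \<le> rad_f Y f N x + e"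
        using n2 \<epsilon>e by (simp add: algebra_simps)
    qed
    have "l \<in> Cent_f Y f N x" using lY rl_le rad_le[OF f lY, of x] unfolding Cent_f_def by auto
    then have "l \<in> W" using CW by auto
    then have "eventually (\<lambda>n. yy (r n) \<in> W) sequentially"
      using rl(2) Wo unfolding limitin_def by (auto simp: o_def)
    then obtain n where "yy (r n) \<in> W" unfolding eventually_sequentially by blast
    then show False using yyW by blast
  qed
qed

end
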